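(* For every $\epsilon>0$ there is $\nu_0(\epsilon)$ such that every numerical semigroup $S$ with minimal generators $a_1<a_2<\cdots<a_\nu$ satisfying (i) $a_2>\frac{c(S)+\mu(S)}{3}$, (ii) $\nu=\nu(S)\ge\nu_0(\epsilon)$, and (iii) $\mu(S)\le\frac{8}{25}\nu^2+\frac15\nu-\frac12-\epsilon$, satisfies Wilf's conjecture, i.e. $\nu(S)\,|L(S)|\ge c(S)$.
   Context: A numerical semigroup is a submonoid $S\subseteq\mathbb{N}$ with finite complement. $\nu(S)$ is the number of minimal generators (embedding dimension), $\mu(S)=a_1$ the smallest minimal generator (multiplicity), $c(S)$ the conductor (least integer with $c(S)+\mathbb{N}\subseteq S$), and $L(S)=\{x\in S: 0\le x<c(S)\}$. $S$ satisfies Wilf's conjecture if $\nu(S)|L(S)|\ge c(S)$. *)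

theory Defs
  imports Complex_Main
begin

definition numerical_semigroup :: "nat set \<Rightarrow> bool" where
  "numerical_semigroup S \<longleftrightarrow> 0 \<in> S \<and> (\<forall>x\<in>S. \<forall>y\<in>S. x + y \<in> S) \<and> finite (UNIV - S)"

definition min_gens :: "nat set \<Rightarrow> nat set" where
  "min_gens S = {a \<in> S. a \<noteq> 0 \<and> \<not> (\<exists>x\<in>S. \<exists>y\<in>S. x \<noteq> 0 \<and> y \<noteq> 0 \<and> a = x + y)}"

definition emb_dim :: "nat set \<Rightarrow> nat" where
  "emb_dim S = card (min_gens S)"

definition multiplicity :: "nat set \<Rightarrow> nat" where
  "multiplicity S = Min (min_gens S)"

definition second_gen :: "nat set \<Rightarrow> nat" where
  "second_gen S = Min (min_gens S - {multiplicity S})"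

definition conductor :: "nat set \<Rightarrow> nat" where
  "conductor S = (LEAST c. \<forall>x\<ge>c. x \<in> S)"

definition Lset :: "nat set \<Rightarrow> nat set" where
  "Lset S = {x \<in> S. x < conductor S}"

end

theory Submission
  imports Defs
begin

lemma ns_props:
  assumes "numerical_semigroup S"
  shows "0 \<in> S" "\<And>x y. x \<in> S \<Longrightarrow> y \<in> S \<Longrightarrow> x + y \<in> S" "finite (UNIV - S)"
  using assms unfolding numerical_semigroup_def by auto

lemma ns_mult:
  assumes "numerical_semigroup S" "x \<in> S"
  shows "k * x \<in> S"
  by (induction k) (use assms ns_props in auto)

lemma conductor_ge:
  assumes "numerical_semigroup S" "x \<ge> conductor S"
  shows "x \<in> S"
proof -
  have "\<exists>c. \<forall>x\<ge>c. x \<in> S"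
  proof -
    have fin: "finite (UNIV - S)" using ns_props(3)[OF assms(1)] .
    obtain b where "\<forall>y \<in> UNIV - S. y < b"
      using fin finite_nat_set_iff_bounded by blast
    thus ?thesis by (metis DiffI UNIV_I not_le)
  qed
  then have "\<forall>x\<ge>conductor S. x \<in> S" unfolding conductor_def by (rule LeastI_ex)
  thus ?thesis using assms(2) by auto
qed

lemma gen_below:
  assumes ns: "numerical_semigroup S" and "x \<in> S" "x \<noteq> 0"
  shows "\<exists>g\<in>min_gens S. g \<le> x \<and> x - g \<in> S"
  using assms(2,3)
proof (induction x rule: less_induct)
  case (less x)
  show ?case
  proof (cases "x \<in> min_gens S")
    case True then show ?thesis using ns_props(1)[OF ns] by auto
  next
    case False
    then obtain y z where yz: "y \<in> S" "z \<in> S" "y \<noteq> 0" "z \<noteq> 0" "x = y + z"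
      using less.prems unfolding min_gens_def by auto
    then have "y < x" by auto
    with less.IH yz obtain g where g: "g \<in> min_gens S" "g \<le> y" "y - g \<in> S" by blast
    have "x - g = (y - g) + z" using g yz by auto
    then have "x - g \<in> S" using ns_props(2)[OF ns] g(3) yz(2) by metis
    moreover have "g \<le> x" using g yz by auto
    ultimately show ?thesis using g(1) by blast
  qed
qed

lemma wilf_main:
  assumes ns: "numerical_semigroup S"
    and a2big: "3 * second_gen S > conductor S + multiplicity S"
  shows "conductor S \<le> emb_dim S * card (Lset S)"
proof (cases "conductor S = 0")
  case True then show ?thesis by simp
next
  case False
  define c where "c = conductor S"
  define M where "M = min_gens S"
  define n where "n = emb_dim S"
  have n_def': "n = card M" by (simp add: n_def M_def emb_dim_def)
  have cpos: "c > 0" using False c_def by auto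
  have cond: "\<And>x. c \<le> x \<Longrightarrow> x \<in> S" using conductor_ge[OF ns] c_def by auto
  have cS: "c \<in> S" using cond by auto
  have add: "\<And>x y. x \<in> S \<Longrightarrow> y \<in> S \<Longrightarrow> x + y \<in> S" using ns_props(2)[OF ns] .
  have MS: "M \<subseteq> S" unfolding M_def min_gens_def by auto
  have Mfin: "finite M"
  proof -
    have "M \<subseteq> {..<2*c}"
    proof
      fix g assume g: "g \<in> M"
      show "g \<in> {..<2*c}"
      proof (rule ccontr)
        assume "g \<notin> {..<2*c}"
        then have ge: "g - c \<ge> c" by auto
        then have "g - c \<in> S" using cond by auto
        moreover have "g = c + (g - c)" "g - c \<noteq> 0" using ge cpos by auto
        ultimately show False using g cS cpos unfolding M_def min_gens_def by blast
      qed
    qed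
    thus ?thesis by (rule finite_subset) auto
  qed
  have Mne: "M \<noteq> {}" using gen_below[OF ns cS] cpos M_def by auto
  define m where "m = multiplicity S"
  have mM: "m \<in> M" using Mfin Mne by (simp add: m_def multiplicity_def M_def)
  have m_le: "\<And>g. g \<in> M \<Longrightarrow> m \<le> g" using Mfin by (simp add: m_def multiplicity_def M_def)
  have mpos: "m > 0" and mS: "m \<in> S" using mM unfolding M_def min_gens_def by auto
  have npos: "n \<ge> 1" using mM Mfin n_def' by (metis Suc_leI card_gt_0_iff empty_iff One_nat_def)
  define a2 where "a2 = second_gen S"
  have a2_le: "\<And>g. g \<in> M - {m} \<Longrightarrow> a2 \<le> g"
    using Mfin by (simp add: a2_def second_gen_def M_def m_def)
  have a2b: "3*a2 > c + m" using a2big by (simp add: a2_def c_def m_def)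
  define Ap where "Ap = {w \<in> S. \<not> (m \<le> w \<and> w - m \<in> S)}"
  have Ap_bound: "\<And>w. w \<in> Ap \<Longrightarrow> w < c + m"
  proof -
    fix w assume w: "w \<in> Ap"
    show "w < c + m"
    proof (rule ccontr)
      assume "\<not> w < c + m"
      then have "m \<le> w" "c \<le> w - m" by auto
      then show False using w cond unfolding Ap_def by auto
    qed
  qed
  have Ap_fin: "finite Ap" using Ap_bound by (meson finite_lessThan finite_subset lessThan_iff subsetI)
  have Ap_inj: "\<And>w w'. w \<in> Ap \<Longrightarrow> w' \<in> Ap \<Longrightarrow> w mod m = w' mod m \<Longrightarrow> w = w'"
  proof -
    have main: "w = w'" if w: "w \<in> Ap" "w' \<in> Ap" "w mod m = w' mod m" "w \<le> w'" for w w'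
    proof (rule ccontr)
      assume ne: "w \<noteq> w'"
      have "m dvd (w' - w)" using w mod_eq_dvd_iff_nat by metis
      then obtain k where k: "w' - w = m * k" by (auto elim: dvdE)
      have "k \<noteq> 0" using k ne w(4) by (metis diff_is_0_eq le_antisym mult_0_right)
      have k1: "m * k = m * (k - 1) + m" using \<open>k \<noteq> 0\<close> by (cases k) auto
      have "w' = w + m * k" using k w(4) by auto
      then have "w' - m = w + (k - 1) * m" and "m \<le> w'" using k1 by (auto simp: mult.commute)
      moreover have "w + (k - 1) * m \<in> S" using add w ns_mult[OF ns mS] unfolding Ap_def by auto
      ultimately show False using w(2) unfolding Ap_def by auto
    qed
    fix w w' assume "w \<in> Ap" "w' \<in> Ap" "w mod m = w' mod m"
    then show "w = w'" using main[of w w'] main[of w' w] by (metis nle_le)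
  qed
  have Ap_card: "card Ap = m"
  proof -
    have "bij_betw (\<lambda>w. w mod m) Ap {..<m}"
    proof (rule bij_betw_imageI)
      show "inj_on (\<lambda>w. w mod m) Ap" using Ap_inj by (meson inj_onI)
      show "(\<lambda>w. w mod m) ` Ap = {..<m}"
      proof
        show "(\<lambda>w. w mod m) ` Ap \<subseteq> {..<m}" using mpos by auto
        show "{..<m} \<subseteq> (\<lambda>w. w mod m) ` Ap"
        proof
          fix r assume r: "r \<in> {..<m}"
          have ex: "c*m + r \<in> S \<and> (c*m + r) mod m = r"
          proof -
            have "c \<le> c * m" using mpos by simp
            then have "c*m + r \<in> S" by (intro cond) linarith
            moreover have "(c*m + r) mod m = r" using r by simp
            ultimately show ?thesis by simp
          qed
          define w where "w = (LEAST x. x \<in> S \<and> x mod m = r)"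
          have w: "w \<in> S \<and> w mod m = r" unfolding w_def by (rule LeastI, rule ex)
          have "w \<in> Ap"
          proof -
            { assume h: "m \<le> w" "w - m \<in> S"
              have "(w - m) mod m = r" using h w by (metis le_add_diff_inverse2 mod_add_self2)
              then have "w \<le> w - m" using Least_le[of "\<lambda>x. x \<in> S \<and> x mod m = r" "w - m"] h
                by (simp add: w_def[symmetric])
              then have False using h mpos by auto }
            then show ?thesis using w unfolding Ap_def by auto
          qed
          then show "r \<in> (\<lambda>w. w mod m) ` Ap" using w by force
        qed
      qed
    qed
    then show ?thesis by (simp add: bij_betw_same_card)
  qed
  have gen_Ap: "\<And>g. g \<in> M - {m} \<Longrightarrow> g \<in> Ap"
  proof -
    fix g assume g: "g \<in> M - {m}"
    { assume h: "m \<le> g" "g - m \<in> S"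
      then have "g = m + (g - m)" "g - m \<noteq> 0" using g by auto
      then have False using g h mS mpos unfolding M_def min_gens_def by blast }
    then show "g \<in> Ap" using g MS unfolding Ap_def by auto
  qed
  have zero_Ap: "0 \<in> Ap" using ns_props(1)[OF ns] mpos unfolding Ap_def by auto
  have m_nAp: "m \<notin> Ap" using ns_props(1)[OF ns] unfolding Ap_def by auto
  have zero_nM: "0 \<notin> M" unfolding M_def min_gens_def by auto
  define T where "T = Ap - {0} - M"
  have Tfin: "finite T" using Ap_fin T_def by auto
  have card_eq: "m = n + card T"
  proof -
    have eqA: "Ap = ({0} \<union> (M - {m})) \<union> T" using gen_Ap zero_Ap m_nAp unfolding T_def by blast
    have disj: "({0} \<union> (M - {m})) \<inter> T = {}" unfolding T_def by blast
    have "card Ap = card ({0} \<union> (M - {m})) + card T"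
      unfolding eqA by (rule card_Un_disjoint) (use Mfin Tfin disj in auto)
    moreover have "card ({0} \<union> (M - {m})) = card {0::nat} + card (M - {m})"
      by (rule card_Un_disjoint) (use Mfin zero_nM in auto)
    moreover have "card (M - {m}) = n - 1" using Mfin mM n_def' by simp
    ultimately show ?thesis using Ap_card npos by simp
  qed
  define P where "P = {g \<in> M - {m}. g < c}"
  have Pfin: "finite P" using Mfin P_def by auto
  have P_Ap: "P \<subseteq> Ap" using gen_Ap P_def by auto
  have cardP: "card P + 1 \<le> n"
  proof -
    have "card P \<le> card (M - {m})" using Mfin P_def by (intro card_mono) auto
    then show ?thesis using Mfin mM npos n_def' by auto
  qed
  have key: "\<And>t u v. t \<in> Ap \<Longrightarrow> u \<in> S \<Longrightarrow> v \<in> S \<Longrightarrow> u \<noteq> 0 \<Longrightarrow> t = u + v \<Longrightarrow>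
      \<exists>g\<in>M-{m}. g \<le> u \<and> u - g \<in> S"
  proof -
    fix t u v assume h: "t \<in> Ap" "u \<in> S" "v \<in> S" "u \<noteq> 0" "t = u + v"
    obtain g where g: "g \<in> M" "g \<le> u" "u - g \<in> S" using gen_below[OF ns h(2,4)] M_def by auto
    have "g \<noteq> m"
    proof
      assume "g = m"
      then have "t - m = (u - m) + v" "m \<le> t" using g h by auto
      moreover have "(u - m) + v \<in> S" using add g(3) h(3) \<open>g = m\<close> by simp
      ultimately show False using h(1) unfolding Ap_def by auto
    qed
    then show "\<exists>g\<in>M-{m}. g \<le> u \<and> u - g \<in> S" using g by auto
  qed
  have T_decomp: "\<And>t. t \<in> T \<Longrightarrow> \<exists>x y. x \<in> P \<and> y \<in> P \<and> t = x + y"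
  proof -
    fix t assume tT: "t \<in> T"
    then have tAp: "t \<in> Ap" and t0: "t \<noteq> 0" and tM: "t \<notin> M" and tS: "t \<in> S"
      unfolding T_def Ap_def by auto
    obtain y z where yz: "y \<in> S" "z \<in> S" "y \<noteq> 0" "z \<noteq> 0" "t = y + z"
      using tS t0 tM unfolding M_def min_gens_def by auto
    obtain g where g: "g \<in> M - {m}" "g \<le> y" "y - g \<in> S" using key[OF tAp yz(1,2,3,5)] by auto
    obtain g' where g': "g' \<in> M - {m}" "g' \<le> z" "z - g' \<in> S"
      using key[OF tAp yz(2,1,4)] yz(5) by (auto simp: add.commute)
    have ga: "a2 \<le> g" "a2 \<le> g'" using a2_le g g' by auto
    have tb: "t < c + m" using Ap_bound tAp by auto
    have y_eq: "y = g"
    proof (rule ccontr)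
      assume "y \<noteq> g"
      then have "y - g \<noteq> 0" using g by auto
      moreover have "g + z \<in> S" using g MS yz add by auto
      moreover have "t = (y - g) + (g + z)" using g yz by auto
      ultimately obtain g'' where "g'' \<in> M - {m}" "g'' \<le> y - g"
        using key[OF tAp g(3)] by blast
      then have "a2 \<le> g''" using a2_le by auto
      then have "3 * a2 \<le> t" using \<open>g'' \<le> y - g\<close> ga g g' yz by linarith
      then show False using a2b tb by linarith
    qed
    have z_eq: "z = g'"
    proof (rule ccontr)
      assume "z \<noteq> g'"
      then have "z - g' \<noteq> 0" using g' by auto
      moreover have "g' + y \<in> S" using g' MS yz add by auto
      moreover have "t = (z - g') + (g' + y)" using g' yz by auto
      ultimately obtain g'' where "g'' \<in> M - {m}" "g'' \<le> z - g'"
        using key[OF tAp g'(3)] by blast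
      then have "a2 \<le> g''" using a2_le by auto
      then have "3 * a2 \<le> t" using \<open>g'' \<le> z - g'\<close> ga g g' yz by linarith
      then show False using a2b tb by linarith
    qed
    have "g > m" "g' > m" using g g' m_le by force+
    then have "g < c" "g' < c" using tb y_eq z_eq yz by auto
    then show "\<exists>x y. x \<in> P \<and> y \<in> P \<and> t = x + y" using g g' y_eq z_eq yz P_def by auto
  qed
  define h where "h w = card {k. w + k*m < c}" for w
  have h_set: "{k. w + k*m < c} = {..< (c - w + m - 1) div m}" for w
  proof -
    have "w + k*m < c \<longleftrightarrow> k < (c - w + m - 1) div m" for k
    proof -
      have "k < (c - w + m - 1) div m \<longleftrightarrow> Suc k \<le> (c - w + m - 1) div m" by auto
      also have "\<dots> \<longleftrightarrow> Suc k * m \<le> c - w + m - 1" using mpos by (simp add: less_eq_div_iff_mult_less_eq)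
      also have "\<dots> \<longleftrightarrow> w + k*m < c" using mpos by auto
      finally show ?thesis by simp
    qed
    then show ?thesis by auto
  qed
  have h_eq: "h w = (c - w + m - 1) div m" for w using h_set by (simp add: h_def)
  have h_ge: "h w * m + w \<ge> c" for w
  proof -
    have "(c - w + m - 1) = (c - w + m - 1) div m * m + (c - w + m - 1) mod m" by simp
    moreover have "(c - w + m - 1) mod m < m" using mpos by simp
    ultimately show ?thesis unfolding h_eq by linarith
  qed
  define q where "q = h 0"
  have q_le: "q * m < c + m"
  proof -
    have "(c + m - 1) = (c + m - 1) div m * m + (c + m - 1) mod m" by simp
    then have "(c + m - 1) div m * m \<le> c + m - 1" by linarith
    then have "(c + m - 1) div m * m < c + m" using mpos by linarith
    then show ?thesis unfolding q_def h_eq by simp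
  qed
  have q_ge: "q * m \<ge> c" using h_ge[of 0] q_def by simp
  define \<rho> where "\<rho> = q * m - c"
  define H where "H = (\<Sum>a\<in>P. h a)"
  define Lset' where "Lset' = Lset S"
  have L_def': "Lset' = {x \<in> S. x < c}" by (simp add: Lset'_def Lset_def c_def)
  have L_bound: "q + H \<le> card Lset'"
  proof -
    define W where "W = insert 0 P"
    have W_Ap: "W \<subseteq> Ap" using P_Ap zero_Ap W_def by auto
    have Wfin: "finite W" using Pfin W_def by auto
    have fins: "\<forall>w\<in>W. finite {k. w + k*m < c}" using h_set by auto
    have "card (Sigma W (\<lambda>w. {k. w + k*m < c})) = (\<Sum>w\<in>W. h w)"
      using card_SigmaI[OF Wfin fins] by (simp add: h_def)
    also have "(\<Sum>w\<in>W. h w) = q + H"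
      using Pfin zero_nM unfolding W_def H_def q_def P_def by (subst sum.insert) auto
    finally have eq: "card (Sigma W (\<lambda>w. {k. w + k*m < c})) = q + H" .
    have inj: "inj_on (\<lambda>(w,k). w + k*m) (Sigma W (\<lambda>w. {k. w + k*m < c}))"
    proof (rule inj_onI)
      fix a b assume a: "a \<in> Sigma W (\<lambda>w. {k. w + k*m < c})" and b: "b \<in> Sigma W (\<lambda>w. {k. w + k*m < c})"
        and e: "(\<lambda>(w,k). w + k*m) a = (\<lambda>(w,k). w + k*m) b"
      obtain w k where wk: "a = (w,k)" by (cases a)
      obtain w' k' where wk': "b = (w',k')" by (cases b)
      have hw: "w \<in> W" "w' \<in> W" using a b wk wk' by auto
      have e2: "w + k*m = w' + k'*m" using e wk wk' by simp
      then have "(w + k*m) mod m = (w' + k'*m) mod m" by simp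
      then have "w mod m = w' mod m" by simp
      then have "w = w'" using Ap_inj hw W_Ap by blast
      then have "k = k'" using e2 mpos by simp
      then show "a = b" using wk wk' \<open>w = w'\<close> by simp
    qed
    have sub: "(\<lambda>(w,k). w + k*m) ` (Sigma W (\<lambda>w. {k. w + k*m < c})) \<subseteq> Lset'"
      unfolding L_def' using W_Ap add ns_mult[OF ns mS] unfolding Ap_def by auto
    have Lfin: "finite Lset'" unfolding L_def' by auto
    have "card (Sigma W (\<lambda>w. {k. w + k*m < c})) \<le> card Lset'"
      using card_inj_on_le[OF inj sub Lfin] .
    then show ?thesis using eq by simp
  qed
  have "\<forall>t\<in>T. \<exists>xy. fst xy \<in> P \<and> snd xy \<in> P \<and> t = fst xy + snd xy" using T_decomp by fastforce
  then obtain f where f: "\<forall>t\<in>T. fst (f t) \<in> P \<and> snd (f t) \<in> P \<and> t = fst (f t) + snd (f t)"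
    using bchoice by metis
  define x where "x t = fst (f t)" for t
  define y where "y t = snd (f t)" for t
  have xy: "\<And>t. t \<in> T \<Longrightarrow> x t \<in> P \<and> y t \<in> P \<and> t = x t + y t" using f x_def y_def by auto
  define s where "s t = h (x t) + h (y t)" for t
  have s_ge: "q \<le> s t + (if c + m \<le> t + \<rho> then 1 else 0)" if tT: "t \<in> T" for t
  proof -
    have a: "h (x t) * m + x t \<ge> c" "h (y t) * m + y t \<ge> c" using h_ge by auto
    have tt: "t = x t + y t" using xy tT by auto
    have tb: "t < c + m" using Ap_bound tT T_def by auto
    have sm: "s t * m + t \<ge> 2 * c" using a tt unfolding s_def by (simp add: algebra_simps)
    have rho: "q * m = c + \<rho>" "\<rho> < m" using q_ge q_le \<rho>_def by auto
    show ?thesis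
    proof (cases "c + m \<le> t + \<rho>")
      case True
      have "q * m < (s t + 2) * m" using sm tb rho by (simp add: algebra_simps)
      then have "q < s t + 2" using mult_less_cancel2 by blast
      then show ?thesis using True by simp
    next
      case False
      have "q * m < (s t + 1) * m" using sm False rho by (simp add: algebra_simps)
      then have "q < s t + 1" using mult_less_cancel2 by blast
      then show ?thesis using False by simp
    qed
  qed
  have T1: "card {t \<in> T. c + m \<le> t + \<rho>} \<le> \<rho>"
  proof -
    have "{t \<in> T. c + m \<le> t + \<rho>} \<subseteq> {c + m - \<rho> ..< c + m}"
      using Ap_bound T_def by auto
    then have "card {t \<in> T. c + m \<le> t + \<rho>} \<le> card {c + m - \<rho> ..< c + m}"
      by (intro card_mono) auto
    moreover have "\<rho> < m" using q_le q_ge \<rho>_def by linarith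
    ultimately show ?thesis by simp
  qed
  have sum1: "q * card T \<le> (\<Sum>t\<in>T. s t) + \<rho>"
  proof -
    have "q * card T = (\<Sum>t\<in>T. q)" by simp
    also have "\<dots> \<le> (\<Sum>t\<in>T. s t + (if c + m \<le> t + \<rho> then 1 else 0))"
      by (intro sum_mono s_ge)
    also have "\<dots> = (\<Sum>t\<in>T. s t) + (\<Sum>t\<in>T. (if c + m \<le> t + \<rho> then 1 else 0))"
      by (simp add: sum.distrib)
    also have "(\<Sum>t\<in>T. (if c + m \<le> t + \<rho> then 1 else 0)) = card {t \<in> T. c + m \<le> t + \<rho>}"
      using Tfin by (simp add: sum.inter_filter[symmetric])
    finally show ?thesis using T1 by linarith
  qed
  have fiber: "(\<Sum>t\<in>T. h (g t)) = (\<Sum>a\<in>P. h a * card {t\<in>T. g t = a})"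
    if g: "\<And>t. t \<in> T \<Longrightarrow> g t \<in> P" for g :: "nat \<Rightarrow> nat"
  proof -
    have "(\<Sum>t\<in>T. h (g t)) = (\<Sum>t\<in>T. \<Sum>a\<in>P. (if g t = a then h a else 0))"
      using g Pfin by (intro sum.cong) (auto simp: sum.delta)
    also have "\<dots> = (\<Sum>a\<in>P. \<Sum>t\<in>T. (if g t = a then h a else 0))" by (rule sum.swap)
    also have "\<dots> = (\<Sum>a\<in>P. h a * card {t\<in>T. g t = a})"
      using Tfin by (intro sum.cong) (auto simp: sum.inter_filter[symmetric])
    finally show ?thesis .
  qed
  have cnt: "card {t\<in>T. x t = a} + card {t\<in>T. y t = a} \<le> n" if aP: "a \<in> P" for a
  proof -
    define A1 where "A1 = {t\<in>T. x t = a}"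
    define A2 where "A2 = {t\<in>T. y t = a}"
    have fin: "finite A1" "finite A2" using Tfin A1_def A2_def by auto
    have "card A1 + card A2 = card (A1 \<union> A2) + card (A1 \<inter> A2)"
      using card_Un_Int[OF fin] .
    moreover have "card (A1 \<inter> A2) \<le> 1"
    proof -
      have "A1 \<inter> A2 \<subseteq> {2*a}"
      proof
        fix t assume "t \<in> A1 \<inter> A2"
        then have "t \<in> T" "x t = a" "y t = a" unfolding A1_def A2_def by auto
        then show "t \<in> {2*a}" using xy[of t] by simp
      qed
      then show ?thesis using card_mono[of "{2*a}" "A1 \<inter> A2"] by simp
    qed
    moreover have "card (A1 \<union> A2) \<le> card P"
    proof -
      have inj: "inj_on (\<lambda>t. t - a) (A1 \<union> A2)"
      proof (rule inj_on_diff_nat)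
        fix t assume "t \<in> A1 \<union> A2"
        then have "t \<in> T" "x t = a \<or> y t = a" unfolding A1_def A2_def by auto
        moreover have "x t \<le> t" "y t \<le> t" using xy[OF \<open>t \<in> T\<close>] by linarith+
        ultimately show "a \<le> t" by auto
      qed
      have "(\<lambda>t. t - a) ` (A1 \<union> A2) \<subseteq> P"
      proof
        fix u assume "u \<in> (\<lambda>t. t - a) ` (A1 \<union> A2)"
        then obtain t where t: "t \<in> A1 \<union> A2" "u = t - a" by auto
        then have tT: "t \<in> T" and "x t = a \<or> y t = a" unfolding A1_def A2_def by auto
        moreover have "x t \<in> P" "y t \<in> P" "t = x t + y t" using xy[OF tT] by auto
        moreover have "t - x t = y t" "t - y t = x t" using xy[OF tT] by linarith+
        ultimately show "u \<in> P" using t(2) by auto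
      qed
      then show ?thesis using card_inj_on_le[OF inj _ Pfin] by auto
    qed
    ultimately have "card A1 + card A2 \<le> n" using cardP by linarith
    then show ?thesis unfolding A1_def A2_def .
  qed
  have sum2: "(\<Sum>t\<in>T. s t) \<le> n * H"
  proof -
    have "(\<Sum>t\<in>T. s t) = (\<Sum>t\<in>T. h (x t)) + (\<Sum>t\<in>T. h (y t))"
      by (simp add: s_def sum.distrib)
    also have "\<dots> = (\<Sum>a\<in>P. h a * (card {t\<in>T. x t = a} + card {t\<in>T. y t = a}))"
      using fiber[of x] fiber[of y] xy by (simp add: sum.distrib algebra_simps)
    also have "\<dots> \<le> (\<Sum>a\<in>P. h a * n)"
      using cnt by (intro sum_mono) simp
    also have "\<dots> = n * H" by (simp add: H_def sum_distrib_left mult.commute)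
    finally show ?thesis .
  qed
  have "n * (q + H) \<le> n * card Lset'" using L_bound by simp
  moreover have "q * m = c + \<rho>" using q_ge \<rho>_def by simp
  moreover have "q * m = n * q + q * card T" using card_eq by (simp add: algebra_simps)
  ultimately have "c \<le> n * card Lset'" using sum1 sum2 by (simp add: algebra_simps)
  then show ?thesis by (simp add: c_def n_def Lset'_def)
qed

theorem theorem4p5:
  fixes \<epsilon> :: real
  assumes "\<epsilon> > 0"
  shows "\<exists>\<nu>\<^sub>0::nat. \<forall>S. numerical_semigroup S \<longrightarrow>
     real (second_gen S) > (real (conductor S) + real (multiplicity S)) / 3 \<longrightarrow>
     emb_dim S \<ge> \<nu>\<^sub>0 \<longrightarrow>
     real (multiplicity S) \<le> 8/25 * real (emb_dim S)^2 + 1/5 * real (emb_dim S) - 1/2 - \<epsilon> \<longrightarrow>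
     emb_dim S * card (Lset S) \<ge> conductor S"
proof (intro exI[of _ 0] allI impI)
  fix S assume ns: "numerical_semigroup S"
    and h: "real (second_gen S) > (real (conductor S) + real (multiplicity S)) / 3"
  have "real (conductor S + multiplicity S) < real (3 * second_gen S)" using h by simp
  then have "3 * second_gen S > conductor S + multiplicity S" by (simp only: of_nat_less_iff)
  then show "conductor S \<le> emb_dim S * card (Lset S)" using wilf_main[OF ns] by simp
qed

end
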